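(* Let $c\in\mathbb{R}\setminus\{0\}$ and let $\mathbf f_c:\mathbb{R}^2\to\mathbb{R}^2$ be $$\mathbf f_c(u,v)=\bigl(-3u^2-cv,\ -3v^2-cu\bigr).$$ Let $\mathbf s=(s_1,s_2)$ be a point such that $\mathbf f_c(\mathbf x)=\mathbf s$ has exactly four distinct solutions $\mathbf x_i=(u_i,v_i)\in\mathbb{R}^2$, $i=1,\dots,4$, each with $\det(\mathrm{Jac}\,\mathbf f_c)(\mathbf x_i)\neq0$. Then, with $\mathfrak M_i=1/\det(\mathrm{Jac}\,\mathbf f_c)(\mathbf x_i)=\frac{1}{36u_iv_i-c^2}$, $$\mathfrak M_1+\mathfrak M_2+\mathfrak M_3+\mathfrak M_4=0.$$
   Context: $\mathbf f_c$ is the generic local form of a one-parameter family of maps between planes near a hyperbolic umbilic singularity; it is induced by the family of functions $F_{c,\mathbf s}(u,v)=s_1u+s_2v+cuv+u^3+v^3$. The points $\mathbf s$ with four preimages form the four-image region of $\mathbf f_c$. *)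

theory Defs
  imports "HOL-Analysis.Analysis"
begin

definition fc :: "real \<Rightarrow> real \<times> real \<Rightarrow> real \<times> real" where
  "fc c x = (-3 * (fst x)^2 - c * snd x, -3 * (snd x)^2 - c * fst x)"

text \<open>Determinant of the Jacobian matrix of fc at (u,v):
  det [[-6u, -c], [-c, -6v]] = 36 u v - c^2.\<close>
definition jac_det_fc :: "real \<Rightarrow> real \<times> real \<Rightarrow> real" where
  "jac_det_fc c x = (-6 * fst x) * (-6 * snd x) - (-c) * (-c)"

end

theory Submission
  imports Defs
begin

lemma dd1:
  fixes a b KA KB KC :: real
  assumes "a \<noteq> b" "27*a^4 + KA*a^2 + KB*a + KC = 0" "27*b^4 + KA*b^2 + KB*b + KC = 0"
  shows "27*(a^3+a^2*b+a*b^2+b^3) + KA*(a+b) + KB = 0"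
proof -
  have "(a-b)*(27*(a^3+a^2*b+a*b^2+b^3) + KA*(a+b) + KB) = 0"
    using assms(2,3) by algebra
  thus ?thesis using assms(1) by simp
qed

lemma dd2:
  fixes a b c KA KB :: real
  assumes "b \<noteq> c" "27*(a^3+a^2*b+a*b^2+b^3) + KA*(a+b) + KB = 0"
     "27*(a^3+a^2*c+a*c^2+c^3) + KA*(a+c) + KB = 0"
  shows "27*(a^2+b^2+c^2+a*b+a*c+b*c) + KA = 0"
proof -
  have "(b-c)*(27*(a^2+b^2+c^2+a*b+a*c+b*c) + KA) = 0"
    using assms(2,3) by algebra
  thus ?thesis using assms(1) by simp
qed

lemma dd3:
  fixes a b c d KA :: real
  assumes "c \<noteq> d" "27*(a^2+b^2+c^2+a*b+a*c+b*c) + KA = 0"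
     "27*(a^2+b^2+d^2+a*b+a*d+b*d) + KA = 0"
  shows "a+b+c+d = 0"
proof -
  have "(c-d)*(27*(a+b+c+d)) = 0"
    using assms(2,3) by algebra
  thus ?thesis using assms(1) by simp
qed

lemma deriv_prod:
  fixes a b c d KA KB KC :: real
  assumes "a\<noteq>b" "a\<noteq>c" "a\<noteq>d" "b\<noteq>c" "b\<noteq>d" "c\<noteq>d"
    and P: "\<forall>x\<in>{a,b,c,d}. 27*x^4 + KA*x^2 + KB*x + KC = 0"
  shows "108*a^3 + 2*KA*a + KB = 27*((a-b)*(a-c)*(a-d))"
proof -
  have h1: "27*(a^3+a^2*b+a*b^2+b^3) + KA*(a+b) + KB = 0"
    using dd1[OF assms(1), of KA KB KC] P by simp
  have h1': "27*(a^3+a^2*c+a*c^2+c^3) + KA*(a+c) + KB = 0"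
    using dd1[OF assms(2), of KA KB KC] P by simp
  have h1'': "27*(a^3+a^2*d+a*d^2+d^3) + KA*(a+d) + KB = 0"
    using dd1[OF assms(3), of KA KB KC] P by simp
  have h2: "27*(a^2+b^2+c^2+a*b+a*c+b*c) + KA = 0"
    using dd2[OF assms(4) h1 h1'] .
  have h2': "27*(a^2+b^2+d^2+a*b+a*d+b*d) + KA = 0"
    using dd2[OF assms(5) h1 h1''] .
  have h3: "a+b+c+d = 0" using dd3[OF assms(6) h2 h2'] .
  show ?thesis using h1 h2 h3 by algebra
qed

lemma sum_inv:
  fixes a b c d :: real
  assumes "a\<noteq>b" "a\<noteq>c" "a\<noteq>d" "b\<noteq>c" "b\<noteq>d" "c\<noteq>d"
  shows "1/((a-b)*(a-c)*(a-d)) + 1/((b-a)*(b-c)*(b-d)) + 1/((c-a)*(c-b)*(c-d))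
       + 1/((d-a)*(d-b)*(d-c)) = 0"
proof -
  have n: "a-b\<noteq>0" "a-c\<noteq>0" "a-d\<noteq>0" "b-c\<noteq>0" "b-d\<noteq>0" "c-d\<noteq>0"
          "b-a\<noteq>0" "c-a\<noteq>0" "d-a\<noteq>0" "c-b\<noteq>0" "d-b\<noteq>0" "d-c\<noteq>0"
    using assms by auto
  have m: "(a-b)*(a-c)*(a-d) \<noteq> 0" "(b-a)*(b-c)*(b-d) \<noteq> 0" "(c-a)*(c-b)*(c-d) \<noteq> 0"
     "(d-a)*(d-b)*(d-c) \<noteq> 0" using n by auto
  show ?thesis using n by (simp add: divide_simps) (simp add: algebra_simps)
qed

theorem theorem1:
  fixes c :: real and s :: "real \<times> real"
  assumes "c \<noteq> 0"
    and "finite {x. fc c x = s}"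
    and "card {x. fc c x = s} = 4"
    and "\<forall>x\<in>{x. fc c x = s}. jac_det_fc c x \<noteq> 0"
  shows "(\<Sum>x\<in>{x. fc c x = s}. 1 / jac_det_fc c x) = 0"
proof -
  define S where "S = {x. fc c x = s}"
  obtain s1 s2 :: real where s: "s = (s1, s2)" by fastforce
  define KA :: real where "KA = 18* s1"
  define KB :: real where "KB = c^3"
  define KC :: real where "KC = 3* s1^2 + c^2* s2"
  have mem: "x \<in> S \<longleftrightarrow> c * snd x = -(s1 + 3*(fst x)^2) \<and> -3*(snd x)^2 - c*fst x = s2" for x
    unfolding S_def fc_def s by auto
  have vdet: "x \<in> S \<Longrightarrow> snd x = -(s1 + 3*(fst x)^2) / c" for x
    using mem[of x] assms(1) by (simp add: field_simps)
  have Peq: "27*(fst x)^4 + KA*(fst x)^2 + KB*(fst x) + KC = 0" if "x \<in> S" for x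
  proof -
    have e1: "c * snd x = -(s1 + 3*(fst x)^2)" and e2: "-3*(snd x)^2 - c*fst x = s2"
      using mem[of x] that by auto
    have "c^2 * (-3*(snd x)^2 - c*fst x) = c^2* s2" using e2 by simp
    hence "-3*(c* snd x)^2 - c^3*fst x = c^2* s2" by (simp add: power2_eq_square power3_eq_cube algebra_simps)
    hence "-3*(s1 + 3*(fst x)^2)^2 - c^3*fst x = c^2* s2" using e1 by (simp add: power2_eq_square algebra_simps)
    thus ?thesis unfolding KA_def KB_def KC_def by algebra
  qed
  have Jeq: "1 / jac_det_fc c x = -c / (108*(fst x)^3 + 2*KA*fst x + KB)" if "x \<in> S" for x
  proof -
    have e1: "c * snd x = -(s1 + 3*(fst x)^2)" using mem[of x] that by auto
    have cj: "c * jac_det_fc c x = -(108*(fst x)^3 + 2*KA*fst x + KB)"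
      unfolding jac_det_fc_def KA_def KB_def using e1 by algebra
    have jn: "jac_det_fc c x \<noteq> 0" using assms(4) that unfolding S_def by blast
    have dn: "108*(fst x)^3 + 2*KA*fst x + KB \<noteq> 0" using cj jn assms(1)
      by (metis mult_eq_0_iff neg_equal_0_iff_equal)
    have "-c / (108*(fst x)^3 + 2*KA*fst x + KB) = -c / (-(c * jac_det_fc c x))" using cj by simp
    also have "\<dots> = 1 / jac_det_fc c x" using jn assms(1) by (simp add: field_simps)
    finally show ?thesis by simp
  qed
  have "card S = Suc (Suc (Suc (Suc 0)))" using assms(3) S_def by simp
  then obtain x1 x2 x3 x4 where S4: "S = {x1,x2,x3,x4}" and d: "x1\<noteq>x2" "x1\<noteq>x3" "x1\<noteq>x4"
    "x2\<noteq>x3" "x2\<noteq>x4" "x3\<noteq>x4"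
    unfolding card_Suc_eq by fastforce
  have inj: "fst x \<noteq> fst y" if "x \<in> S" "y \<in> S" "x \<noteq> y" for x y
    using vdet[OF that(1)] vdet[OF that(2)] that(3) prod_eq_iff by metis
  have xs: "x1 \<in> S" "x2 \<in> S" "x3 \<in> S" "x4 \<in> S" using S4 by auto
  define a where "a = fst x1"
  define b where "b = fst x2"
  define cc where "cc = fst x3"
  define dd where "dd = fst x4"
  have dist: "a\<noteq>b" "a\<noteq>cc" "a\<noteq>dd" "b\<noteq>cc" "b\<noteq>dd" "cc\<noteq>dd"
    unfolding a_def b_def cc_def dd_def using inj xs d by auto
  have P: "\<forall>x\<in>{a,b,cc,dd}. 27*x^4 + KA*x^2 + KB*x + KC = 0"
    unfolding a_def b_def cc_def dd_def using Peq xs by auto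
  have P2: "\<forall>x\<in>{b,a,cc,dd}. 27*x^4 + KA*x^2 + KB*x + KC = 0" using P by auto
  have P3: "\<forall>x\<in>{cc,a,b,dd}. 27*x^4 + KA*x^2 + KB*x + KC = 0" using P by auto
  have P4: "\<forall>x\<in>{dd,a,b,cc}. 27*x^4 + KA*x^2 + KB*x + KC = 0" using P by auto
  have D1: "108*a^3 + 2*KA*a + KB = 27*((a-b)*(a-cc)*(a-dd))"
    using deriv_prod[OF dist P] .
  have D2: "108*b^3 + 2*KA*b + KB = 27*((b-a)*(b-cc)*(b-dd))"
    using deriv_prod[OF _ _ _ _ _ _ P2] dist by auto
  have D3: "108*cc^3 + 2*KA*cc + KB = 27*((cc-a)*(cc-b)*(cc-dd))"
    using deriv_prod[OF _ _ _ _ _ _ P3] dist by auto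
  have D4: "108*dd^3 + 2*KA*dd + KB = 27*((dd-a)*(dd-b)*(dd-cc))"
    using deriv_prod[OF _ _ _ _ _ _ P4] dist by auto
  have j1: "1 / jac_det_fc c x1 = -c/27 * (1/((a-b)*(a-cc)*(a-dd)))"
  proof -
    have "1 / jac_det_fc c x1 = -c / (108*a^3 + 2*KA*a + KB)" using Jeq[OF xs(1)] unfolding a_def .
    also have "\<dots> = -c / (27*((a-b)*(a-cc)*(a-dd)))" using D1 by simp
    finally show ?thesis by simp
  qed
  have j2: "1 / jac_det_fc c x2 = -c/27 * (1/((b-a)*(b-cc)*(b-dd)))"
  proof -
    have "1 / jac_det_fc c x2 = -c / (108*b^3 + 2*KA*b + KB)" using Jeq[OF xs(2)] unfolding b_def .
    also have "\<dots> = -c / (27*((b-a)*(b-cc)*(b-dd)))" using D2 by simp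
    finally show ?thesis by simp
  qed
  have j3: "1 / jac_det_fc c x3 = -c/27 * (1/((cc-a)*(cc-b)*(cc-dd)))"
  proof -
    have "1 / jac_det_fc c x3 = -c / (108*cc^3 + 2*KA*cc + KB)" using Jeq[OF xs(3)] unfolding cc_def .
    also have "\<dots> = -c / (27*((cc-a)*(cc-b)*(cc-dd)))" using D3 by simp
    finally show ?thesis by simp
  qed
  have j4: "1 / jac_det_fc c x4 = -c/27 * (1/((dd-a)*(dd-b)*(dd-cc)))"
  proof -
    have "1 / jac_det_fc c x4 = -c / (108*dd^3 + 2*KA*dd + KB)" using Jeq[OF xs(4)] unfolding dd_def .
    also have "\<dots> = -c / (27*((dd-a)*(dd-b)*(dd-cc)))" using D4 by simp
    finally show ?thesis by simp
  qed
  have "(\<Sum>x\<in>S. 1 / jac_det_fc c x) = 1 / jac_det_fc c x1 + 1 / jac_det_fc c x2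
      + 1 / jac_det_fc c x3 + 1 / jac_det_fc c x4"
    using S4 d by (simp add: add.assoc)
  also have "\<dots> = -c/27 * (1/((a-b)*(a-cc)*(a-dd)) + 1/((b-a)*(b-cc)*(b-dd))
       + 1/((cc-a)*(cc-b)*(cc-dd)) + 1/((dd-a)*(dd-b)*(dd-cc)))"
    using j1 j2 j3 j4 by (simp add: distrib_left)
  also have "\<dots> = 0" using sum_inv[OF dist] by simp
  finally show ?thesis unfolding S_def .
qed

end
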